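(* Let $M$ be a mechanism for a combinatorial auction setting with item set $[m]$, and let $V,V'$ be classes of valuations on $2^{[m]}$. If $M$ is $(\lambda,\mu)$-smooth for the class $V'$ and $V$ is pointwise $\beta$-approximated by $V'$ (for some $\beta\ge1$), then $M$ is $(\lambda/\beta,\mu)$-smooth for the class $V$.
   Context: In a mechanism, each bidder $i$ chooses a strategy $b_i$; the outcome of a strategy profile $b$ gives $i$ a set $S_i(b)$ (the sets being disjoint) and a payment $P_i(b)$, with quasi-linear utility $u_i(b;v_i)=v_i(S_i(b))-P_i(b)$. $SW(\mathrm{OPT}(v))=\max\{\sum_iv_i(S_i):(S_i)\text{ a partition of }[m]\}$. A mechanism is $(\lambda,\mu)$-smooth for a valuation class $V$ if for every valuation profile $v$ with all $v_i\in V$ there exist deviation mappings $b_i'$ from strategies of $i$ to strategies of $i$ (depending on $v$) such that for every strategy profile $b$: $\sum_iu_i(b_i'(b_i),b_{-i};v_i)\ge\lambda SW(\mathrm{OPT}(v))-\mu\sum_iP_i(b)$. A valuation class $V$ is pointwise $\beta$-approximated by a class $V'$ if for every $v\in V$ and every $S\subseteq[m]$ there exists $v'\in V'$ (which may depend on $S$) with $\beta v'(S)\ge v(S)$ and $v(T)\ge v'(T)$ for all $T\subseteq[m]$. *)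

theory Defs
  imports Complex_Main "HOL-Library.FuncSet"
begin

text \<open>A mechanism is given by an allocation function alloc b i (the set S_i(b))
and a payment function pay b i (P_i(b)).\<close>

definition is_mechanism ::
  "nat \<Rightarrow> nat \<Rightarrow> (nat \<Rightarrow> 'b set) \<Rightarrow> ((nat \<Rightarrow> 'b) \<Rightarrow> nat \<Rightarrow> nat set) \<Rightarrow> bool" where
  "is_mechanism n m Strat alloc \<longleftrightarrow>
     (\<forall>b \<in> PiE {..<n} Strat.
        (\<forall>i<n. alloc b i \<subseteq> {..<m}) \<and>
        (\<forall>i<n. \<forall>j<n. i \<noteq> j \<longrightarrow> alloc b i \<inter> alloc b j = {}))"

definition utility ::
  "((nat \<Rightarrow> 'b) \<Rightarrow> nat \<Rightarrow> nat set) \<Rightarrow> ((nat \<Rightarrow> 'b) \<Rightarrow> nat \<Rightarrow> real)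
   \<Rightarrow> (nat \<Rightarrow> 'b) \<Rightarrow> nat \<Rightarrow> (nat set \<Rightarrow> real) \<Rightarrow> real" where
  "utility alloc pay b i vi = vi (alloc b i) - pay b i"

definition partitions :: "nat \<Rightarrow> nat \<Rightarrow> (nat \<Rightarrow> nat set) set" where
  "partitions n m = {S \<in> PiE {..<n} (\<lambda>_. Pow {..<m}).
       (\<forall>i<n. \<forall>j<n. i \<noteq> j \<longrightarrow> S i \<inter> S j = {}) \<and> (\<Union>i<n. S i) = {..<m}}"

definition opt_sw :: "nat \<Rightarrow> nat \<Rightarrow> (nat \<Rightarrow> nat set \<Rightarrow> real) \<Rightarrow> real" where
  "opt_sw n m v = Max ((\<lambda>S. \<Sum>i<n. v i (S i)) ` partitions n m)"

definition smooth ::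
  "nat \<Rightarrow> nat \<Rightarrow> (nat \<Rightarrow> 'b set) \<Rightarrow> ((nat \<Rightarrow> 'b) \<Rightarrow> nat \<Rightarrow> nat set) \<Rightarrow> ((nat \<Rightarrow> 'b) \<Rightarrow> nat \<Rightarrow> real)
   \<Rightarrow> (nat set \<Rightarrow> real) set \<Rightarrow> real \<Rightarrow> real \<Rightarrow> bool" where
  "smooth n m Strat alloc pay V lam mu \<longleftrightarrow>
     (\<forall>v. (\<forall>i<n. v i \<in> V) \<longrightarrow>
        (\<exists>b'. (\<forall>i<n. \<forall>s\<in>Strat i. b' i s \<in> Strat i) \<and>
           (\<forall>b \<in> PiE {..<n} Strat.
              (\<Sum>i<n. utility alloc pay (b(i := b' i (b i))) i (v i))
                \<ge> lam * opt_sw n m v - mu * (\<Sum>i<n. pay b i))))"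

definition pointwise_approx ::
  "nat \<Rightarrow> (nat set \<Rightarrow> real) set \<Rightarrow> (nat set \<Rightarrow> real) set \<Rightarrow> real \<Rightarrow> bool" where
  "pointwise_approx m V V' beta \<longleftrightarrow>
     (\<forall>v\<in>V. \<forall>S. S \<subseteq> {..<m} \<longrightarrow>
        (\<exists>v'\<in>V'. beta * v' S \<ge> v S \<and> (\<forall>T. T \<subseteq> {..<m} \<longrightarrow> v T \<ge> v' T)))"

end

theory Submission
  imports Defs
begin

lemma partitions_finite: "finite (partitions n m)"
proof -
  have "finite (PiE {..<n} (\<lambda>_. Pow {..<m}))" by (intro finite_PiE) auto
  thus ?thesis unfolding partitions_def by auto
qed

lemma partitions_ne: assumes "0 < n" shows "partitions n m \<noteq> {}"
proof -
  define S :: "nat \<Rightarrow> nat set" where "S = (\<lambda>i. if i = 0 then {..<m} else if i < n then {} else undefined)"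
  have "S \<in> partitions n m"
    unfolding partitions_def S_def using assms
    by (auto simp: PiE_def extensional_def split: if_splits)
  thus ?thesis by auto
qed

theorem mainTheorem11:
  fixes n m :: nat
    and Strat :: "nat \<Rightarrow> 'b set"
    and alloc :: "(nat \<Rightarrow> 'b) \<Rightarrow> nat \<Rightarrow> nat set"
    and pay :: "(nat \<Rightarrow> 'b) \<Rightarrow> nat \<Rightarrow> real"
    and V V' :: "(nat set \<Rightarrow> real) set"
    and lam mu beta :: real
  assumes "is_mechanism n m Strat alloc"
    and "0 \<le> lam"
    and "1 \<le> beta"
    and "smooth n m Strat alloc pay V' lam mu"
    and "pointwise_approx m V V' beta"
  shows "smooth n m Strat alloc pay V (lam / beta) mu"
proof (cases "n = 0")
  case True
  obtain b' where b': "\<forall>b \<in> PiE {..<n} Strat.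
              (\<Sum>i<n. utility alloc pay (b(i := b' i (b i))) i ((\<lambda>_. \<lambda>_. 0) i))
                \<ge> lam * opt_sw n m (\<lambda>_. \<lambda>_. 0) - mu * (\<Sum>i<n. pay b i)"
    using assms(4) True unfolding smooth_def by auto
  have X: "opt_sw n m v = opt_sw n m (\<lambda>_ _. 0)" for v :: "nat \<Rightarrow> nat set \<Rightarrow> real"
    using True by (simp add: opt_sw_def)
  have "lam * opt_sw n m (\<lambda>_ _. 0) \<le> 0"
    using b' True by auto
  hence "lam / beta * opt_sw n m (\<lambda>_ _. 0) \<le> 0"
    using assms(3) by (simp add: divide_nonpos_pos)
  thus ?thesis using True X unfolding smooth_def by (auto simp del: X) (metis X)
next
  case False
  show ?thesis unfolding smooth_def
  proof (intro allI impI)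
    fix v :: "nat \<Rightarrow> nat set \<Rightarrow> real"
    assume vV: "\<forall>i<n. v i \<in> V"
    let ?f = "\<lambda>v S. \<Sum>i<n. v i (S i)"
    have fin: "finite (?f v ` partitions n m)" using partitions_finite by auto
    have ne: "?f v ` partitions n m \<noteq> {}" using partitions_ne False by auto
    obtain S where S: "S \<in> partitions n m" "opt_sw n m v = ?f v S"
      using Max_in[OF fin ne] unfolding opt_sw_def by auto
    have Ssub: "\<forall>i<n. S i \<subseteq> {..<m}" using S(1) unfolding partitions_def by auto
    have "\<forall>i<n. \<exists>w\<in>V'. beta * w (S i) \<ge> v i (S i) \<and> (\<forall>T. T \<subseteq> {..<m} \<longrightarrow> v i T \<ge> w T)"
      using assms(5) vV Ssub unfolding pointwise_approx_def by blast
    then obtain w where w: "\<And>i. i < n \<Longrightarrow> w i \<in> V' \<and> beta * w i (S i) \<ge> v i (S i) \<and> (\<forall>T. T \<subseteq> {..<m} \<longrightarrow> v i T \<ge> w i T)"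
      by metis
    obtain b' where b'1: "\<forall>i<n. \<forall>s\<in>Strat i. b' i s \<in> Strat i" and
      b'2: "\<forall>b \<in> PiE {..<n} Strat.
              (\<Sum>i<n. utility alloc pay (b(i := b' i (b i))) i (w i))
                \<ge> lam * opt_sw n m w - mu * (\<Sum>i<n. pay b i)"
      using assms(4) w unfolding smooth_def by blast
    have finw: "finite (?f w ` partitions n m)" using partitions_finite by auto
    have "?f w S \<le> opt_sw n m w" unfolding opt_sw_def using finw S(1) by auto
    moreover have "opt_sw n m v \<le> beta * ?f w S"
      using S(2) w by (auto simp: sum_distrib_left intro: sum_mono)
    ultimately have opt: "opt_sw n m v / beta \<le> opt_sw n m w"
      using assms(3) by (simp add: divide_le_eq mult.commute) (smt (verit) mult_left_mono)
    show "\<exists>b'. (\<forall>i<n. \<forall>s\<in>Strat i. b' i s \<in> Strat i) \<and>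
           (\<forall>b \<in> PiE {..<n} Strat.
              (\<Sum>i<n. utility alloc pay (b(i := b' i (b i))) i (v i))
                \<ge> lam / beta * opt_sw n m v - mu * (\<Sum>i<n. pay b i))"
    proof (intro exI[of _ b'] conjI ballI)
      show "\<forall>i<n. \<forall>s\<in>Strat i. b' i s \<in> Strat i" using b'1 .
    next
      fix b assume b: "b \<in> PiE {..<n} Strat"
      have "\<And>i. i < n \<Longrightarrow> utility alloc pay (b(i := b' i (b i))) i (w i)
            \<le> utility alloc pay (b(i := b' i (b i))) i (v i)"
      proof -
        fix i assume i: "i < n"
        have "b(i := b' i (b i)) \<in> PiE {..<n} Strat"
          using b b'1 i by (auto simp: PiE_def extensional_def Pi_def)
        hence "alloc (b(i := b' i (b i))) i \<subseteq> {..<m}"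
          using assms(1) i unfolding is_mechanism_def by blast
        thus "utility alloc pay (b(i := b' i (b i))) i (w i)
            \<le> utility alloc pay (b(i := b' i (b i))) i (v i)"
          using w[OF i] by (simp add: utility_def)
      qed
      hence "(\<Sum>i<n. utility alloc pay (b(i := b' i (b i))) i (w i))
           \<le> (\<Sum>i<n. utility alloc pay (b(i := b' i (b i))) i (v i))"
        by (intro sum_mono) auto
      moreover have "lam / beta * opt_sw n m v \<le> lam * opt_sw n m w"
        using opt assms(2) mult_left_mono by fastforce
      ultimately show "(\<Sum>i<n. utility alloc pay (b(i := b' i (b i))) i (v i))
                \<ge> lam / beta * opt_sw n m v - mu * (\<Sum>i<n. pay b i)"
        using b'2 b by fastforce
    qed
  qed
qed

end
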